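(* Let $\Omega$ be a set and let $G=H\times K\leq{\rm Sym}(\Omega)$ be a finite group which is the (internal) direct product of subgroups $H$ and $K$ with $\gcd(|H|,|K|)=1$. Then $Z(G)^{(2),\Omega}=Z(H)^{(2),\Omega}\times Z(K)^{(2),\Omega}$.
   Context: Permutations act on the right. For $X\leq{\rm Sym}(\Omega)$, the $2$-closure of $X$ on $\Omega$ is $X^{(2),\Omega}=\{\theta\in{\rm Sym}(\Omega)\mid \forall \alpha,\beta\in\Omega\ \exists g\in X:\ \alpha^\theta=\alpha^g,\ \beta^\theta=\beta^g\}$; it is a subgroup of ${\rm Sym}(\Omega)$ containing $X$. $Z(X)$ denotes the center of $X$. *)

theory Defs
  imports "HOL-Algebra.Algebra"
begin

text \<open>Sym(Omega) is rendered as the HOL-Algebra group BijGroup Omega (bijections of Omega,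
  extensional outside Omega). Permutation groups are subgroups (carrier sets) of it.\<close>

definition perm_center :: "'a set \<Rightarrow> ('a \<Rightarrow> 'a) set \<Rightarrow> ('a \<Rightarrow> 'a) set" where
  "perm_center \<Omega> A = {z \<in> A. \<forall>x \<in> A. z \<otimes>\<^bsub>BijGroup \<Omega>\<^esub> x = x \<otimes>\<^bsub>BijGroup \<Omega>\<^esub> z}"

definition two_closure :: "'a set \<Rightarrow> ('a \<Rightarrow> 'a) set \<Rightarrow> ('a \<Rightarrow> 'a) set" where
  "two_closure \<Omega> A = {\<theta> \<in> carrier (BijGroup \<Omega>).
      \<forall>\<alpha> \<in> \<Omega>. \<forall>\<beta> \<in> \<Omega>. \<exists>g \<in> A. \<theta> \<alpha> = g \<alpha> \<and> \<theta> \<beta> = g \<beta>}"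

definition internal_direct_product :: "'a set \<Rightarrow> ('a \<Rightarrow> 'a) set \<Rightarrow> ('a \<Rightarrow> 'a) set \<Rightarrow> ('a \<Rightarrow> 'a) set \<Rightarrow> bool" where
  "internal_direct_product \<Omega> G H K \<longleftrightarrow>
     subgroup H (BijGroup \<Omega>) \<and> subgroup K (BijGroup \<Omega>) \<and>
     G = H <#>\<^bsub>BijGroup \<Omega>\<^esub> K \<and>
     H \<inter> K = {\<one>\<^bsub>BijGroup \<Omega>\<^esub>} \<and>
     (\<forall>h \<in> H. \<forall>k \<in> K. h \<otimes>\<^bsub>BijGroup \<Omega>\<^esub> k = k \<otimes>\<^bsub>BijGroup \<Omega>\<^esub> h)"

end

theory Submission imports Defs begin
lemmas GB = group_BijGroup

lemma carS: "carrier (BijGroup Om) = Bij Om" by (simp add: BijGroup_def)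
lemma mult_apply: "x \<in> Bij Om \<Longrightarrow> y \<in> Bij Om \<Longrightarrow> a \<in> Om \<Longrightarrow> (x \<otimes>\<^bsub>BijGroup Om\<^esub> y) a = x (y a)"
  by (simp add: BijGroup_def compose_def)
lemma one_apply: "a \<in> Om \<Longrightarrow> \<one>\<^bsub>BijGroup Om\<^esub> a = a" by (simp add: BijGroup_def)
lemma Bij_mem: "x \<in> Bij Om \<Longrightarrow> a \<in> Om \<Longrightarrow> x a \<in> Om"
  using Bij_imp_funcset by blast
lemma Bij_eqI: "x \<in> Bij Om \<Longrightarrow> y \<in> Bij Om \<Longrightarrow> (\<And>a. a \<in> Om \<Longrightarrow> x a = y a) \<Longrightarrow> x = y"
  by (meson Bij_imp_extensional extensionalityI)

lemma pow_Bij: "x \<in> Bij Om \<Longrightarrow> x [^]\<^bsub>BijGroup Om\<^esub> (n::nat) \<in> Bij Om"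
  using monoid.nat_pow_closed[OF group.is_monoid[OF GB[of Om]], of x n] by (simp add: carS)
lemma pow_Suc2: "x \<in> Bij Om \<Longrightarrow> x [^]\<^bsub>BijGroup Om\<^esub> (Suc n) = x \<otimes>\<^bsub>BijGroup Om\<^esub> x [^]\<^bsub>BijGroup Om\<^esub> n"
  using monoid.nat_pow_Suc2[OF group.is_monoid[OF GB[of Om]], of x n] by (simp add: carS)

lemma S_one: "\<one>\<^bsub>BijGroup Om\<^esub> \<in> Bij Om"
  using group.is_monoid[OF GB[of Om]] monoid.one_closed carS by metis
lemma S_mult: "x \<in> Bij Om \<Longrightarrow> y \<in> Bij Om \<Longrightarrow> x \<otimes>\<^bsub>BijGroup Om\<^esub> y \<in> Bij Om"
  using group.is_monoid[OF GB[of Om]] monoid.m_closed carS by metis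
lemma S_inv: "x \<in> Bij Om \<Longrightarrow> inv\<^bsub>BijGroup Om\<^esub> x \<in> Bij Om"
  using GB[of Om] group.inv_closed carS by metis
lemma S_rinv: "x \<in> Bij Om \<Longrightarrow> x \<otimes>\<^bsub>BijGroup Om\<^esub> inv\<^bsub>BijGroup Om\<^esub> x = \<one>\<^bsub>BijGroup Om\<^esub>"
  using GB[of Om] group.r_inv carS by metis
lemma S_linv: "x \<in> Bij Om \<Longrightarrow> inv\<^bsub>BijGroup Om\<^esub> x \<otimes>\<^bsub>BijGroup Om\<^esub> x = \<one>\<^bsub>BijGroup Om\<^esub>"
  using GB[of Om] group.l_inv carS by metis

lemma tc_car: "th \<in> two_closure Om Xs \<Longrightarrow> th \<in> Bij Om"
  by (simp add: two_closure_def carS)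

lemma K:
  assumes "Xs \<subseteq> Bij Om" "th \<in> two_closure Om Xs" "c \<in> Bij Om"
    "\<forall>x\<in>Xs. c \<otimes>\<^bsub>BijGroup Om\<^esub> x = x \<otimes>\<^bsub>BijGroup Om\<^esub> c" "a \<in> Om"
  shows "th (c a) = c (th a)"
proof -
  have ca: "c a \<in> Om" using Bij_mem[OF assms(3,5)] .
  have "\<forall>x\<in>Om. \<forall>y\<in>Om. \<exists>g\<in>Xs. th x = g x \<and> th y = g y"
    using assms(2) unfolding two_closure_def by simp
  then obtain h where h: "h \<in> Xs" "th a = h a" "th (c a) = h (c a)"
    using assms(5) ca by meson
  have hB: "h \<in> Bij Om" using h assms by blast
  have "h (c a) = (h \<otimes>\<^bsub>BijGroup Om\<^esub> c) a" using mult_apply[OF hB assms(3,5)] by simp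
  also have "\<dots> = (c \<otimes>\<^bsub>BijGroup Om\<^esub> h) a" using h assms(4) by simp
  also have "\<dots> = c (h a)" using mult_apply[OF assms(3) hB assms(5)] by simp
  finally show ?thesis using h by simp
qed

lemma P:
  assumes "subgroup Xs (BijGroup Om)" "\<forall>x\<in>Xs. \<forall>y\<in>Xs. x \<otimes>\<^bsub>BijGroup Om\<^esub> y = y \<otimes>\<^bsub>BijGroup Om\<^esub> x"
    "th \<in> two_closure Om Xs" "g \<in> Xs" "a \<in> Om" "th a = g a"
  shows "(th [^]\<^bsub>BijGroup Om\<^esub> (k::nat)) a = (g [^]\<^bsub>BijGroup Om\<^esub> k) a"
proof (induction k)
  case 0
  then show ?case by simp
next
  case (Suc k)
  have XS: "Xs \<subseteq> Bij Om" using subgroup.subset[OF assms(1)] by (simp add: carS)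
  have gS: "g \<in> Bij Om" using XS assms(4) by (rule subsetD)
  have tS: "th \<in> Bij Om" using assms(3) by (rule tc_car)
  have gk: "g [^]\<^bsub>BijGroup Om\<^esub> k \<in> Bij Om" using gS by (rule pow_Bij)
  have tk: "th [^]\<^bsub>BijGroup Om\<^esub> k \<in> Bij Om" using tS by (rule pow_Bij)
  have comm: "\<forall>x\<in>Xs. g [^]\<^bsub>BijGroup Om\<^esub> k \<otimes>\<^bsub>BijGroup Om\<^esub> x = x \<otimes>\<^bsub>BijGroup Om\<^esub> g [^]\<^bsub>BijGroup Om\<^esub> k"
  proof
    fix x assume x: "x \<in> Xs"
    have xc: "x \<in> carrier (BijGroup Om)" using XS x carS by auto
    have gc: "g \<in> carrier (BijGroup Om)" using gS carS by auto
    have "g \<otimes>\<^bsub>BijGroup Om\<^esub> x = x \<otimes>\<^bsub>BijGroup Om\<^esub> g" using assms(2) assms(4) x by simp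
    thus "g [^]\<^bsub>BijGroup Om\<^esub> k \<otimes>\<^bsub>BijGroup Om\<^esub> x = x \<otimes>\<^bsub>BijGroup Om\<^esub> g [^]\<^bsub>BijGroup Om\<^esub> k"
      using monoid.group_commutes_pow[OF group.is_monoid[OF GB[of Om]] _ gc xc] by simp
  qed
  have "(th [^]\<^bsub>BijGroup Om\<^esub> Suc k) a = (th \<otimes>\<^bsub>BijGroup Om\<^esub> th [^]\<^bsub>BijGroup Om\<^esub> k) a"
    using pow_Suc2[OF tS] by simp
  also have "\<dots> = th ((g [^]\<^bsub>BijGroup Om\<^esub> k) a)" using mult_apply[OF tS tk assms(5)] Suc by simp
  also have "\<dots> = (g [^]\<^bsub>BijGroup Om\<^esub> k) (th a)" using K[OF XS assms(3) gk comm assms(5)] .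
  also have "\<dots> = (g [^]\<^bsub>BijGroup Om\<^esub> k \<otimes>\<^bsub>BijGroup Om\<^esub> g) a" using mult_apply[OF gk gS assms(5)] assms(6) by simp
  also have "\<dots> = (g [^]\<^bsub>BijGroup Om\<^esub> Suc k) a" by simp
  finally show ?case .
qed


lemma tc_iff: "t \<in> two_closure Om Xs \<longleftrightarrow> t \<in> Bij Om \<and> (\<forall>x\<in>Om. \<forall>y\<in>Om. \<exists>g\<in>Xs. t x = g x \<and> t y = g y)"
  by (simp add: two_closure_def carS)

lemma tc_subgroup:
  assumes sg: "subgroup Xs (BijGroup Om)"
  shows "subgroup (two_closure Om Xs) (BijGroup Om)"
proof -
  interpret G: group "BijGroup Om" by (rule GB)
  have XS: "Xs \<subseteq> Bij Om" using subgroup.subset[OF sg] by (simp add: carS)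
  show ?thesis
  proof (rule G.subgroupI)
    show "two_closure Om Xs \<subseteq> carrier (BijGroup Om)" using tc_car[of _ Om Xs] by (auto simp: carS)
  next
    have "\<one>\<^bsub>BijGroup Om\<^esub> \<in> Xs" using subgroup.one_closed[OF sg] .
    moreover have "\<one>\<^bsub>BijGroup Om\<^esub> \<in> Bij Om" by (rule S_one)
    ultimately have "\<one>\<^bsub>BijGroup Om\<^esub> \<in> two_closure Om Xs" unfolding tc_iff by auto
    thus "two_closure Om Xs \<noteq> {}" by auto
  next
    fix t assume t: "t \<in> two_closure Om Xs"
    have tB: "t \<in> Bij Om" using t by (rule tc_car)
    have itB: "inv\<^bsub>BijGroup Om\<^esub> t \<in> Bij Om" using tB by (rule S_inv)
    have "\<forall>x\<in>Om. \<forall>y\<in>Om. \<exists>g\<in>Xs. (inv\<^bsub>BijGroup Om\<^esub> t) x = g x \<and> (inv\<^bsub>BijGroup Om\<^esub> t) y = g y"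
    proof (intro ballI)
      fix x y assume x: "x \<in> Om" and y: "y \<in> Om"
      define x' where "x' = (inv\<^bsub>BijGroup Om\<^esub> t) x"
      define y' where "y' = (inv\<^bsub>BijGroup Om\<^esub> t) y"
      have x'O: "x' \<in> Om" unfolding x'_def using Bij_mem[OF itB x] .
      have y'O: "y' \<in> Om" unfolding y'_def using Bij_mem[OF itB y] .
      have rinv: "t \<otimes>\<^bsub>BijGroup Om\<^esub> inv\<^bsub>BijGroup Om\<^esub> t = \<one>\<^bsub>BijGroup Om\<^esub>"
        using tB by (rule S_rinv)
      have tx: "t x' = x" unfolding x'_def
        using mult_apply[OF tB itB x] rinv one_apply[OF x] by simp
      have ty: "t y' = y" unfolding y'_def
        using mult_apply[OF tB itB y] rinv one_apply[OF y] by simp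
      have "\<forall>x\<in>Om. \<forall>y\<in>Om. \<exists>g\<in>Xs. t x = g x \<and> t y = g y" using t unfolding tc_iff by simp
      then obtain g where g: "g \<in> Xs" "t x' = g x'" "t y' = g y'" using x'O y'O by meson
      have gB: "g \<in> Bij Om" using XS g(1) by (rule subsetD)
      have igX: "inv\<^bsub>BijGroup Om\<^esub> g \<in> Xs" using subgroup.m_inv_closed[OF sg g(1)] .
      have igB: "inv\<^bsub>BijGroup Om\<^esub> g \<in> Bij Om" using XS igX by (rule subsetD)
      have linv: "inv\<^bsub>BijGroup Om\<^esub> g \<otimes>\<^bsub>BijGroup Om\<^esub> g = \<one>\<^bsub>BijGroup Om\<^esub>"
        using gB by (rule S_linv)
      have "(inv\<^bsub>BijGroup Om\<^esub> g) x = x'"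
        using mult_apply[OF igB gB x'O] linv one_apply[OF x'O] g(2) tx by simp
      moreover have "(inv\<^bsub>BijGroup Om\<^esub> g) y = y'"
        using mult_apply[OF igB gB y'O] linv one_apply[OF y'O] g(3) ty by simp
      ultimately show "\<exists>g\<in>Xs. (inv\<^bsub>BijGroup Om\<^esub> t) x = g x \<and> (inv\<^bsub>BijGroup Om\<^esub> t) y = g y"
        using igX unfolding x'_def y'_def by metis
    qed
    thus "inv\<^bsub>BijGroup Om\<^esub> t \<in> two_closure Om Xs" using itB unfolding tc_iff by simp
  next
    fix t1 t2 assume t1: "t1 \<in> two_closure Om Xs" and t2: "t2 \<in> two_closure Om Xs"
    have t1B: "t1 \<in> Bij Om" using t1 by (rule tc_car)
    have t2B: "t2 \<in> Bij Om" using t2 by (rule tc_car)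
    have pB: "t1 \<otimes>\<^bsub>BijGroup Om\<^esub> t2 \<in> Bij Om" using t1B t2B by (rule S_mult)
    have "\<forall>x\<in>Om. \<forall>y\<in>Om. \<exists>g\<in>Xs. (t1 \<otimes>\<^bsub>BijGroup Om\<^esub> t2) x = g x \<and> (t1 \<otimes>\<^bsub>BijGroup Om\<^esub> t2) y = g y"
    proof (intro ballI)
      fix x y assume x: "x \<in> Om" and y: "y \<in> Om"
      have "\<forall>x\<in>Om. \<forall>y\<in>Om. \<exists>g\<in>Xs. t2 x = g x \<and> t2 y = g y" using t2 unfolding tc_iff by simp
      then obtain g where g: "g \<in> Xs" "t2 x = g x" "t2 y = g y" using x y by meson
      have gB: "g \<in> Bij Om" using XS g(1) by (rule subsetD)
      have gx: "g x \<in> Om" using Bij_mem[OF gB x] .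
      have gy: "g y \<in> Om" using Bij_mem[OF gB y] .
      have "\<forall>x\<in>Om. \<forall>y\<in>Om. \<exists>g\<in>Xs. t1 x = g x \<and> t1 y = g y" using t1 unfolding tc_iff by simp
      then obtain h where h: "h \<in> Xs" "t1 (g x) = h (g x)" "t1 (g y) = h (g y)" using gx gy by meson
      have hB: "h \<in> Bij Om" using XS h(1) by (rule subsetD)
      have hg: "h \<otimes>\<^bsub>BijGroup Om\<^esub> g \<in> Xs" using subgroup.m_closed[OF sg h(1) g(1)] .
      have "(t1 \<otimes>\<^bsub>BijGroup Om\<^esub> t2) x = (h \<otimes>\<^bsub>BijGroup Om\<^esub> g) x"
        using mult_apply[OF t1B t2B x] mult_apply[OF hB gB x] g h by simp
      moreover have "(t1 \<otimes>\<^bsub>BijGroup Om\<^esub> t2) y = (h \<otimes>\<^bsub>BijGroup Om\<^esub> g) y"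
        using mult_apply[OF t1B t2B y] mult_apply[OF hB gB y] g h by simp
      ultimately show "\<exists>g\<in>Xs. (t1 \<otimes>\<^bsub>BijGroup Om\<^esub> t2) x = g x \<and> (t1 \<otimes>\<^bsub>BijGroup Om\<^esub> t2) y = g y"
        using hg by metis
    qed
    thus "t1 \<otimes>\<^bsub>BijGroup Om\<^esub> t2 \<in> two_closure Om Xs" using pB unfolding tc_iff by simp
  qed
qed


context group
begin

lemma center_sg:
  assumes sg: "subgroup H G"
  shows "subgroup {z \<in> H. \<forall>x\<in>H. z \<otimes> x = x \<otimes> z} G"
proof (rule subgroupI)
  show "{z \<in> H. \<forall>x\<in>H. z \<otimes> x = x \<otimes> z} \<subseteq> carrier G" using subgroup.subset[OF sg] by auto
  have "\<one> \<in> {z \<in> H. \<forall>x\<in>H. z \<otimes> x = x \<otimes> z}" using subgroup.one_closed[OF sg] subgroup.subset[OF sg] by auto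
  thus "{z \<in> H. \<forall>x\<in>H. z \<otimes> x = x \<otimes> z} \<noteq> {}" by auto
next
  fix a assume a: "a \<in> {z \<in> H. \<forall>x\<in>H. z \<otimes> x = x \<otimes> z}"
  have aH: "a \<in> H" and ac: "\<forall>x\<in>H. a \<otimes> x = x \<otimes> a" using a by auto
  have aG: "a \<in> carrier G" using aH subgroup.subset[OF sg] by auto
  have "\<forall>x\<in>H. inv a \<otimes> x = x \<otimes> inv a"
  proof
    fix x assume xH: "x \<in> H"
    have xG: "x \<in> carrier G" using xH subgroup.subset[OF sg] by auto
    have "inv a \<otimes> x = inv a \<otimes> (x \<otimes> a) \<otimes> inv a" using aG xG by (simp add: m_assoc)
    also have "\<dots> = inv a \<otimes> (a \<otimes> x) \<otimes> inv a" using ac xH by simp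
    also have "\<dots> = x \<otimes> inv a" using aG xG by (simp add: m_assoc[symmetric])
    finally show "inv a \<otimes> x = x \<otimes> inv a" .
  qed
  thus "inv a \<in> {z \<in> H. \<forall>x\<in>H. z \<otimes> x = x \<otimes> z}" using subgroup.m_inv_closed[OF sg aH] by auto
next
  fix a b assume a: "a \<in> {z \<in> H. \<forall>x\<in>H. z \<otimes> x = x \<otimes> z}" and b: "b \<in> {z \<in> H. \<forall>x\<in>H. z \<otimes> x = x \<otimes> z}"
  have aH: "a \<in> H" and ac: "\<forall>x\<in>H. a \<otimes> x = x \<otimes> a" using a by auto
  have bH: "b \<in> H" and bc: "\<forall>x\<in>H. b \<otimes> x = x \<otimes> b" using b by auto
  have aG: "a \<in> carrier G" using aH subgroup.subset[OF sg] by auto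
  have bG: "b \<in> carrier G" using bH subgroup.subset[OF sg] by auto
  have "\<forall>x\<in>H. a \<otimes> b \<otimes> x = x \<otimes> (a \<otimes> b)"
  proof
    fix x assume xH: "x \<in> H"
    have xG: "x \<in> carrier G" using xH subgroup.subset[OF sg] by auto
    have "a \<otimes> b \<otimes> x = a \<otimes> (x \<otimes> b)" using aG bG xG bc xH by (simp add: m_assoc)
    also have "\<dots> = (x \<otimes> a) \<otimes> b" using aG bG xG ac xH by (simp add: m_assoc[symmetric])
    finally show "a \<otimes> b \<otimes> x = x \<otimes> (a \<otimes> b)" using aG bG xG by (simp add: m_assoc)
  qed
  thus "a \<otimes> b \<in> {z \<in> H. \<forall>x\<in>H. z \<otimes> x = x \<otimes> z}" using subgroup.m_closed[OF sg aH bH] by auto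
qed

lemma pow_card_sg:
  assumes sg: "subgroup H G" and aH: "a \<in> H"
  shows "a [^] card H = \<one>"
proof -
  interpret Hg: group "G\<lparr>carrier := H\<rparr>" using subgroup.subgroup_is_group[OF sg is_group] .
  have "a [^]\<^bsub>G\<lparr>carrier := H\<rparr>\<^esub> order (G\<lparr>carrier := H\<rparr>) = \<one>\<^bsub>G\<lparr>carrier := H\<rparr>\<^esub>"
    using Hg.pow_order_eq_1 aH by simp
  thus ?thesis using nat_pow_consistent[of a "card H" H] by (simp add: order_def)
qed

lemma dp_mult_center:
  assumes sH: "subgroup H G" and sK: "subgroup K G" and Gs: "Gs = H <#> K"
    and cHK: "\<forall>h\<in>H. \<forall>k\<in>K. h \<otimes> k = k \<otimes> h"
    and a: "a \<in> {z \<in> H. \<forall>x\<in>H. z \<otimes> x = x \<otimes> z}" and b: "b \<in> {z \<in> K. \<forall>x\<in>K. z \<otimes> x = x \<otimes> z}"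
  shows "a \<otimes> b \<in> {z \<in> Gs. \<forall>x\<in>Gs. z \<otimes> x = x \<otimes> z}"
proof -
  have aH: "a \<in> H" and ac: "\<forall>x\<in>H. a \<otimes> x = x \<otimes> a" using a by auto
  have bK: "b \<in> K" and bc: "\<forall>x\<in>K. b \<otimes> x = x \<otimes> b" using b by auto
  have aG: "a \<in> carrier G" using aH subgroup.subset[OF sH] by auto
  have bG: "b \<in> carrier G" using bK subgroup.subset[OF sK] by auto
  have "a \<otimes> b \<in> Gs" unfolding Gs set_mult_def using aH bK by auto
  moreover have "\<forall>x\<in>Gs. a \<otimes> b \<otimes> x = x \<otimes> (a \<otimes> b)"
  proof
    fix x assume "x \<in> Gs"
    then obtain h k where hK: "h \<in> H" "k \<in> K" "x = h \<otimes> k" unfolding Gs set_mult_def by auto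
    have hG: "h \<in> carrier G" using hK subgroup.subset[OF sH] by auto
    have kG: "k \<in> carrier G" using hK subgroup.subset[OF sK] by auto
    have bh: "b \<otimes> h = h \<otimes> b" using cHK[rule_format, OF hK(1) bK] by simp
    have ak: "a \<otimes> k = k \<otimes> a" using cHK[rule_format, OF aH hK(2)] by simp
    have ah: "a \<otimes> h = h \<otimes> a" using ac hK by simp
    have bk: "b \<otimes> k = k \<otimes> b" using bc hK by simp
    have "a \<otimes> b \<otimes> (h \<otimes> k) = a \<otimes> (b \<otimes> h) \<otimes> k" using aG bG hG kG by (simp add: m_assoc)
    also have "\<dots> = (a \<otimes> h) \<otimes> (b \<otimes> k)" using aG bG hG kG bh by (simp add: m_assoc)
    also have "\<dots> = (h \<otimes> a) \<otimes> (k \<otimes> b)" using ah bk by simp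
    also have "\<dots> = h \<otimes> (a \<otimes> k) \<otimes> b" using aG bG hG kG by (simp add: m_assoc)
    also have "\<dots> = h \<otimes> k \<otimes> (a \<otimes> b)" using aG bG hG kG ak by (simp add: m_assoc)
    finally show "a \<otimes> b \<otimes> x = x \<otimes> (a \<otimes> b)" using hK by simp
  qed
  ultimately show ?thesis by auto
qed

lemma dp_center_decomp:
  assumes sH: "subgroup H G" and sK: "subgroup K G" and Gs: "Gs = H <#> K"
    and cHK: "\<forall>h\<in>H. \<forall>k\<in>K. h \<otimes> k = k \<otimes> h"
    and z: "z \<in> {z \<in> Gs. \<forall>x\<in>Gs. z \<otimes> x = x \<otimes> z}"
  shows "\<exists>a\<in>{z \<in> H. \<forall>x\<in>H. z \<otimes> x = x \<otimes> z}. \<exists>b\<in>{z \<in> K. \<forall>x\<in>K. z \<otimes> x = x \<otimes> z}. z = a \<otimes> b"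
proof -
  have zG: "z \<in> Gs" and zc: "\<forall>x\<in>Gs. z \<otimes> x = x \<otimes> z" using z by auto
  obtain h k where hK: "h \<in> H" "k \<in> K" "z = h \<otimes> k" using zG unfolding Gs set_mult_def by auto
  have hG: "h \<in> carrier G" using hK subgroup.subset[OF sH] by auto
  have kG: "k \<in> carrier G" using hK subgroup.subset[OF sK] by auto
  have HGs: "\<And>x. x \<in> H \<Longrightarrow> x \<in> Gs"
  proof -
    fix x assume "x \<in> H"
    moreover have "x = x \<otimes> \<one>" using \<open>x \<in> H\<close> subgroup.subset[OF sH] by auto
    ultimately show "x \<in> Gs" unfolding Gs set_mult_def using subgroup.one_closed[OF sK] by blast
  qed
  have KGs: "\<And>x. x \<in> K \<Longrightarrow> x \<in> Gs"
  proof -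
    fix x assume "x \<in> K"
    moreover have "x = \<one> \<otimes> x" using \<open>x \<in> K\<close> subgroup.subset[OF sK] by auto
    ultimately show "x \<in> Gs" unfolding Gs set_mult_def using subgroup.one_closed[OF sH] by blast
  qed
  have "\<forall>x\<in>H. h \<otimes> x = x \<otimes> h"
  proof
    fix x assume xH: "x \<in> H"
    have xG: "x \<in> carrier G" using xH subgroup.subset[OF sH] by auto
    have kx: "k \<otimes> x = x \<otimes> k" using cHK[rule_format, OF xH hK(2)] by simp
    have "h \<otimes> x \<otimes> k = h \<otimes> k \<otimes> x" using hG kG xG kx by (simp add: m_assoc)
    also have "\<dots> = x \<otimes> (h \<otimes> k)" using zc HGs[OF xH] hK by simp
    also have "\<dots> = x \<otimes> h \<otimes> k" using hG kG xG by (simp add: m_assoc)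
    finally show "h \<otimes> x = x \<otimes> h" using hG kG xG by simp
  qed
  moreover have "\<forall>x\<in>K. k \<otimes> x = x \<otimes> k"
  proof
    fix x assume xK: "x \<in> K"
    have xG: "x \<in> carrier G" using xK subgroup.subset[OF sK] by auto
    have hx: "h \<otimes> x = x \<otimes> h" using cHK[rule_format, OF hK(1) xK] by simp
    have "h \<otimes> (k \<otimes> x) = h \<otimes> k \<otimes> x" using hG kG xG by (simp add: m_assoc)
    also have "\<dots> = x \<otimes> (h \<otimes> k)" using zc KGs[OF xK] hK by simp
    also have "\<dots> = h \<otimes> (x \<otimes> k)" using hG kG xG hx by (simp add: m_assoc[symmetric])
    finally show "k \<otimes> x = x \<otimes> k" using hG kG xG by simp
  qed
  ultimately show ?thesis using hK by auto
qed

end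


theorem mainTheorem4:
  fixes \<Omega> :: "'a set" and G H K :: "('a \<Rightarrow> 'a) set"
  assumes "subgroup G (BijGroup \<Omega>)"
    and "finite G"
    and "internal_direct_product \<Omega> G H K"
    and "coprime (card H) (card K)"
  shows "internal_direct_product \<Omega> (two_closure \<Omega> (perm_center \<Omega> G))
           (two_closure \<Omega> (perm_center \<Omega> H)) (two_closure \<Omega> (perm_center \<Omega> K))"
proof -
  interpret S: group "BijGroup \<Omega>" by (rule GB)
  have cS: "carrier (BijGroup \<Omega>) = Bij \<Omega>" by (rule carS)
  have sG: "subgroup G (BijGroup \<Omega>)" using assms(1) .
  have sH: "subgroup H (BijGroup \<Omega>)" and sK: "subgroup K (BijGroup \<Omega>)"
    and Gd: "G = H <#>\<^bsub>BijGroup \<Omega>\<^esub> K"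
    and cHK: "\<forall>h\<in>H. \<forall>k\<in>K. h \<otimes>\<^bsub>BijGroup \<Omega>\<^esub> k = k \<otimes>\<^bsub>BijGroup \<Omega>\<^esub> h"
    using assms(3) unfolding internal_direct_product_def by auto
  define A where "A = perm_center \<Omega> H"
  define B where "B = perm_center \<Omega> K"
  define Z where "Z = perm_center \<Omega> G"
  have Ad: "A = {z \<in> H. \<forall>x\<in>H. z \<otimes>\<^bsub>BijGroup \<Omega>\<^esub> x = x \<otimes>\<^bsub>BijGroup \<Omega>\<^esub> z}"
    unfolding A_def perm_center_def ..
  have Bd: "B = {z \<in> K. \<forall>x\<in>K. z \<otimes>\<^bsub>BijGroup \<Omega>\<^esub> x = x \<otimes>\<^bsub>BijGroup \<Omega>\<^esub> z}"
    unfolding B_def perm_center_def ..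
  have Zd: "Z = {z \<in> G. \<forall>x\<in>G. z \<otimes>\<^bsub>BijGroup \<Omega>\<^esub> x = x \<otimes>\<^bsub>BijGroup \<Omega>\<^esub> z}"
    unfolding Z_def perm_center_def ..
  have sA: "subgroup A (BijGroup \<Omega>)" unfolding Ad by (rule S.center_sg[OF sH])
  have sB: "subgroup B (BijGroup \<Omega>)" unfolding Bd by (rule S.center_sg[OF sK])
  have sZ: "subgroup Z (BijGroup \<Omega>)" unfolding Zd by (rule S.center_sg[OF sG])
  have AB: "A \<subseteq> Bij \<Omega>" using subgroup.subset[OF sA] cS by simp
  have BB: "B \<subseteq> Bij \<Omega>" using subgroup.subset[OF sB] cS by simp
  have ZB: "Z \<subseteq> Bij \<Omega>" using subgroup.subset[OF sZ] cS by simp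
  have AH: "A \<subseteq> H" unfolding Ad by auto
  have BK: "B \<subseteq> K" unfolding Bd by auto
  have abA: "\<forall>x\<in>A. \<forall>y\<in>A. x \<otimes>\<^bsub>BijGroup \<Omega>\<^esub> y = y \<otimes>\<^bsub>BijGroup \<Omega>\<^esub> x"
  proof (intro ballI)
    fix x y assume x: "x \<in> A" and y: "y \<in> A"
    have xc: "\<forall>z\<in>H. x \<otimes>\<^bsub>BijGroup \<Omega>\<^esub> z = z \<otimes>\<^bsub>BijGroup \<Omega>\<^esub> x" using x unfolding Ad by blast
    have "y \<in> H" using y unfolding Ad by blast
    from bspec[OF xc this] show "x \<otimes>\<^bsub>BijGroup \<Omega>\<^esub> y = y \<otimes>\<^bsub>BijGroup \<Omega>\<^esub> x" .
  qed
  have abB: "\<forall>x\<in>B. \<forall>y\<in>B. x \<otimes>\<^bsub>BijGroup \<Omega>\<^esub> y = y \<otimes>\<^bsub>BijGroup \<Omega>\<^esub> x"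
  proof (intro ballI)
    fix x y assume x: "x \<in> B" and y: "y \<in> B"
    have xc: "\<forall>z\<in>K. x \<otimes>\<^bsub>BijGroup \<Omega>\<^esub> z = z \<otimes>\<^bsub>BijGroup \<Omega>\<^esub> x" using x unfolding Bd by blast
    have "y \<in> K" using y unfolding Bd by blast
    from bspec[OF xc this] show "x \<otimes>\<^bsub>BijGroup \<Omega>\<^esub> y = y \<otimes>\<^bsub>BijGroup \<Omega>\<^esub> x" .
  qed
  have abZ: "\<forall>x\<in>Z. \<forall>y\<in>Z. x \<otimes>\<^bsub>BijGroup \<Omega>\<^esub> y = y \<otimes>\<^bsub>BijGroup \<Omega>\<^esub> x"
  proof (intro ballI)
    fix x y assume x: "x \<in> Z" and y: "y \<in> Z"
    have xc: "\<forall>z\<in>G. x \<otimes>\<^bsub>BijGroup \<Omega>\<^esub> z = z \<otimes>\<^bsub>BijGroup \<Omega>\<^esub> x" using x unfolding Zd by blast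
    have "y \<in> G" using y unfolding Zd by blast
    from bspec[OF xc this] show "x \<otimes>\<^bsub>BijGroup \<Omega>\<^esub> y = y \<otimes>\<^bsub>BijGroup \<Omega>\<^esub> x" .
  qed
  have cAB: "\<And>a b. a \<in> A \<Longrightarrow> b \<in> B \<Longrightarrow> a \<otimes>\<^bsub>BijGroup \<Omega>\<^esub> b = b \<otimes>\<^bsub>BijGroup \<Omega>\<^esub> a"
  proof -
    fix a b assume "a \<in> A" "b \<in> B"
    hence "a \<in> H" "b \<in> K" using AH BK by auto
    thus "a \<otimes>\<^bsub>BijGroup \<Omega>\<^esub> b = b \<otimes>\<^bsub>BijGroup \<Omega>\<^esub> a" using cHK by blast
  qed
  have HG: "H \<subseteq> G"
  proof
    fix x assume xH: "x \<in> H"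
    have "x = x \<otimes>\<^bsub>BijGroup \<Omega>\<^esub> \<one>\<^bsub>BijGroup \<Omega>\<^esub>" using xH subgroup.subset[OF sH] by auto
    thus "x \<in> G" unfolding Gd set_mult_def using xH subgroup.one_closed[OF sK] by blast
  qed
  have KG: "K \<subseteq> G"
  proof
    fix x assume xK: "x \<in> K"
    have "x = \<one>\<^bsub>BijGroup \<Omega>\<^esub> \<otimes>\<^bsub>BijGroup \<Omega>\<^esub> x" using xK subgroup.subset[OF sK] by auto
    thus "x \<in> G" unfolding Gd set_mult_def using xK subgroup.one_closed[OF sH] by blast
  qed
  have fH: "finite H" using finite_subset[OF HG assms(2)] .
  have fK: "finite K" using finite_subset[OF KG assms(2)] .
  have n0: "card H \<noteq> 0" using fH subgroup.one_closed[OF sH] by auto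
  have m0: "card K \<noteq> 0" using fK subgroup.one_closed[OF sK] by auto
  have g1: "gcd (card H) (card K) = 1" using assms(4) by (simp add: coprime_iff_gcd_eq_1)
  have g2: "gcd (card K) (card H) = 1" using g1 by (simp add: gcd.commute)
  obtain u v where uv: "card K * u = card H * v + 1"
    using bezout_nat[OF m0, of "card H"] g2 by auto
  obtain x y where xy: "card H * x = card K * y + 1"
    using bezout_nat[OF n0, of "card K"] g1 by auto
  define ee where "ee = card K * u"
  define ff where "ff = card H * x"
  have aee: "\<And>a. a \<in> A \<Longrightarrow> a [^]\<^bsub>BijGroup \<Omega>\<^esub> ee = a"
  proof -
    fix a assume aA: "a \<in> A"
    have aS: "a \<in> carrier (BijGroup \<Omega>)" using aA AB cS by auto
    have "a [^]\<^bsub>BijGroup \<Omega>\<^esub> ee = (a [^]\<^bsub>BijGroup \<Omega>\<^esub> card H) [^]\<^bsub>BijGroup \<Omega>\<^esub> v \<otimes>\<^bsub>BijGroup \<Omega>\<^esub> a"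
      unfolding ee_def uv using aS by (simp add: S.nat_pow_pow)
    also have "\<dots> = a" using S.pow_card_sg[OF sH] aA AH aS by auto
    finally show "a [^]\<^bsub>BijGroup \<Omega>\<^esub> ee = a" .
  qed
  have aff: "\<And>a. a \<in> A \<Longrightarrow> a [^]\<^bsub>BijGroup \<Omega>\<^esub> ff = \<one>\<^bsub>BijGroup \<Omega>\<^esub>"
  proof -
    fix a assume aA: "a \<in> A"
    have aS: "a \<in> carrier (BijGroup \<Omega>)" using aA AB cS by auto
    have "a [^]\<^bsub>BijGroup \<Omega>\<^esub> ff = (a [^]\<^bsub>BijGroup \<Omega>\<^esub> card H) [^]\<^bsub>BijGroup \<Omega>\<^esub> x"
      unfolding ff_def using aS by (simp add: S.nat_pow_pow)
    also have "\<dots> = \<one>\<^bsub>BijGroup \<Omega>\<^esub>" using S.pow_card_sg[OF sH] aA AH aS by auto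
    finally show "a [^]\<^bsub>BijGroup \<Omega>\<^esub> ff = \<one>\<^bsub>BijGroup \<Omega>\<^esub>" .
  qed
  have bff: "\<And>b. b \<in> B \<Longrightarrow> b [^]\<^bsub>BijGroup \<Omega>\<^esub> ff = b"
  proof -
    fix b assume bB: "b \<in> B"
    have bS: "b \<in> carrier (BijGroup \<Omega>)" using bB BB cS by auto
    have "b [^]\<^bsub>BijGroup \<Omega>\<^esub> ff = (b [^]\<^bsub>BijGroup \<Omega>\<^esub> card K) [^]\<^bsub>BijGroup \<Omega>\<^esub> y \<otimes>\<^bsub>BijGroup \<Omega>\<^esub> b"
      unfolding ff_def xy using bS by (simp add: S.nat_pow_pow)
    also have "\<dots> = b" using S.pow_card_sg[OF sK] bB BK bS by auto
    finally show "b [^]\<^bsub>BijGroup \<Omega>\<^esub> ff = b" .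
  qed
  have bee: "\<And>b. b \<in> B \<Longrightarrow> b [^]\<^bsub>BijGroup \<Omega>\<^esub> ee = \<one>\<^bsub>BijGroup \<Omega>\<^esub>"
  proof -
    fix b assume bB: "b \<in> B"
    have bS: "b \<in> carrier (BijGroup \<Omega>)" using bB BB cS by auto
    have "b [^]\<^bsub>BijGroup \<Omega>\<^esub> ee = (b [^]\<^bsub>BijGroup \<Omega>\<^esub> card K) [^]\<^bsub>BijGroup \<Omega>\<^esub> u"
      unfolding ee_def using bS by (simp add: S.nat_pow_pow)
    also have "\<dots> = \<one>\<^bsub>BijGroup \<Omega>\<^esub>" using S.pow_card_sg[OF sK] bB BK bS by auto
    finally show "b [^]\<^bsub>BijGroup \<Omega>\<^esub> ee = \<one>\<^bsub>BijGroup \<Omega>\<^esub>" .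
  qed
  have gdec: "\<And>g. g \<in> Z \<Longrightarrow> \<exists>a\<in>A. \<exists>b\<in>B. g = a \<otimes>\<^bsub>BijGroup \<Omega>\<^esub> b \<and>
       g [^]\<^bsub>BijGroup \<Omega>\<^esub> ee = a \<and> g [^]\<^bsub>BijGroup \<Omega>\<^esub> ff = b"
  proof -
    fix g assume gZ: "g \<in> Z"
    have "\<exists>a\<in>{z \<in> H. \<forall>x\<in>H. z \<otimes>\<^bsub>BijGroup \<Omega>\<^esub> x = x \<otimes>\<^bsub>BijGroup \<Omega>\<^esub> z}. \<exists>b\<in>{z \<in> K. \<forall>x\<in>K. z \<otimes>\<^bsub>BijGroup \<Omega>\<^esub> x = x \<otimes>\<^bsub>BijGroup \<Omega>\<^esub> z}. g = a \<otimes>\<^bsub>BijGroup \<Omega>\<^esub> b"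
      by (rule S.dp_center_decomp[OF sH sK Gd cHK]) (use gZ in \<open>unfold Zd\<close>)
    then obtain a b where ab0: "a \<in> {z \<in> H. \<forall>x\<in>H. z \<otimes>\<^bsub>BijGroup \<Omega>\<^esub> x = x \<otimes>\<^bsub>BijGroup \<Omega>\<^esub> z}"
       "b \<in> {z \<in> K. \<forall>x\<in>K. z \<otimes>\<^bsub>BijGroup \<Omega>\<^esub> x = x \<otimes>\<^bsub>BijGroup \<Omega>\<^esub> z}" "g = a \<otimes>\<^bsub>BijGroup \<Omega>\<^esub> b"
      by blast
    have ab1: "a \<in> A" unfolding Ad by (rule ab0(1))
    have ab2: "b \<in> B" unfolding Bd by (rule ab0(2))
    note ab = ab1 ab2 ab0(3)
    have aS: "a \<in> carrier (BijGroup \<Omega>)" using ab AB cS by auto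
    have bS: "b \<in> carrier (BijGroup \<Omega>)" using ab BB cS by auto
    have c: "a \<otimes>\<^bsub>BijGroup \<Omega>\<^esub> b = b \<otimes>\<^bsub>BijGroup \<Omega>\<^esub> a" using cAB[OF ab(1,2)] .
    have "g [^]\<^bsub>BijGroup \<Omega>\<^esub> ee = a"
      unfolding ab(3) S.pow_mult_distrib[OF c aS bS, of ee] aee[OF ab(1)] bee[OF ab(2)] using aS by simp
    moreover have "g [^]\<^bsub>BijGroup \<Omega>\<^esub> ff = b"
      unfolding ab(3) S.pow_mult_distrib[OF c aS bS, of ff] aff[OF ab(1)] bff[OF ab(2)] using bS by simp
    ultimately show "\<exists>a\<in>A. \<exists>b\<in>B. g = a \<otimes>\<^bsub>BijGroup \<Omega>\<^esub> b \<and>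
       g [^]\<^bsub>BijGroup \<Omega>\<^esub> ee = a \<and> g [^]\<^bsub>BijGroup \<Omega>\<^esub> ff = b" using ab(1,2,3) by (intro bexI conjI)
  qed
  have tcA: "subgroup (two_closure \<Omega> A) (BijGroup \<Omega>)" by (rule tc_subgroup[OF sA])
  have tcB: "subgroup (two_closure \<Omega> B) (BijGroup \<Omega>)" by (rule tc_subgroup[OF sB])
  have h3: "two_closure \<Omega> Z = two_closure \<Omega> A <#>\<^bsub>BijGroup \<Omega>\<^esub> two_closure \<Omega> B"
  proof (rule equalityI)
    show "two_closure \<Omega> Z \<subseteq> two_closure \<Omega> A <#>\<^bsub>BijGroup \<Omega>\<^esub> two_closure \<Omega> B"
    proof (rule subsetI)
      fix t assume t: "t \<in> two_closure \<Omega> Z"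
      have tB: "t \<in> Bij \<Omega>" using t by (rule tc_car)
      have teB: "t [^]\<^bsub>BijGroup \<Omega>\<^esub> ee \<in> Bij \<Omega>" using tB by (rule pow_Bij)
      have tfB: "t [^]\<^bsub>BijGroup \<Omega>\<^esub> ff \<in> Bij \<Omega>" using tB by (rule pow_Bij)
      have tall: "\<forall>x\<in>\<Omega>. \<forall>y\<in>\<Omega>. \<exists>g\<in>Z. t x = g x \<and> t y = g y" using t unfolding tc_iff by simp
      have te: "t [^]\<^bsub>BijGroup \<Omega>\<^esub> ee \<in> two_closure \<Omega> A"
        unfolding tc_iff
      proof (intro conjI ballI)
        show "t [^]\<^bsub>BijGroup \<Omega>\<^esub> ee \<in> Bij \<Omega>" by (rule teB)
        fix \<alpha> \<beta> assume al: "\<alpha> \<in> \<Omega>" and be: "\<beta> \<in> \<Omega>"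
        obtain g where g: "g \<in> Z" "t \<alpha> = g \<alpha>" "t \<beta> = g \<beta>" using tall al be by meson
        obtain a b where ab: "a \<in> A" "b \<in> B" "g = a \<otimes>\<^bsub>BijGroup \<Omega>\<^esub> b" "g [^]\<^bsub>BijGroup \<Omega>\<^esub> ee = a" "g [^]\<^bsub>BijGroup \<Omega>\<^esub> ff = b"
          using gdec[OF g(1)] by blast
        have "(t [^]\<^bsub>BijGroup \<Omega>\<^esub> ee) \<alpha> = a \<alpha>" using P[OF sZ abZ t g(1) al g(2), of ee] ab(4) by simp
        moreover have "(t [^]\<^bsub>BijGroup \<Omega>\<^esub> ee) \<beta> = a \<beta>" using P[OF sZ abZ t g(1) be g(3), of ee] ab(4) by simp
        ultimately show "\<exists>g\<in>A. (t [^]\<^bsub>BijGroup \<Omega>\<^esub> ee) \<alpha> = g \<alpha> \<and> (t [^]\<^bsub>BijGroup \<Omega>\<^esub> ee) \<beta> = g \<beta>"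
          using ab(1) by (intro bexI conjI)
      qed
      have tf: "t [^]\<^bsub>BijGroup \<Omega>\<^esub> ff \<in> two_closure \<Omega> B"
        unfolding tc_iff
      proof (intro conjI ballI)
        show "t [^]\<^bsub>BijGroup \<Omega>\<^esub> ff \<in> Bij \<Omega>" by (rule tfB)
        fix \<alpha> \<beta> assume al: "\<alpha> \<in> \<Omega>" and be: "\<beta> \<in> \<Omega>"
        obtain g where g: "g \<in> Z" "t \<alpha> = g \<alpha>" "t \<beta> = g \<beta>" using tall al be by meson
        obtain a b where ab: "a \<in> A" "b \<in> B" "g = a \<otimes>\<^bsub>BijGroup \<Omega>\<^esub> b" "g [^]\<^bsub>BijGroup \<Omega>\<^esub> ee = a" "g [^]\<^bsub>BijGroup \<Omega>\<^esub> ff = b"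
          using gdec[OF g(1)] by blast
        have "(t [^]\<^bsub>BijGroup \<Omega>\<^esub> ff) \<alpha> = b \<alpha>" using P[OF sZ abZ t g(1) al g(2), of ff] ab(5) by simp
        moreover have "(t [^]\<^bsub>BijGroup \<Omega>\<^esub> ff) \<beta> = b \<beta>" using P[OF sZ abZ t g(1) be g(3), of ff] ab(5) by simp
        ultimately show "\<exists>g\<in>B. (t [^]\<^bsub>BijGroup \<Omega>\<^esub> ff) \<alpha> = g \<alpha> \<and> (t [^]\<^bsub>BijGroup \<Omega>\<^esub> ff) \<beta> = g \<beta>"
          using ab(2) by (intro bexI conjI)
      qed
      have eq: "t = t [^]\<^bsub>BijGroup \<Omega>\<^esub> ee \<otimes>\<^bsub>BijGroup \<Omega>\<^esub> t [^]\<^bsub>BijGroup \<Omega>\<^esub> ff"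
      proof (rule Bij_eqI[OF tB S_mult[OF teB tfB]])
        fix \<alpha> assume al: "\<alpha> \<in> \<Omega>"
        obtain g where g: "g \<in> Z" "t \<alpha> = g \<alpha>" "t \<alpha> = g \<alpha>" using tall al by meson
        obtain a b where ab: "a \<in> A" "b \<in> B" "g = a \<otimes>\<^bsub>BijGroup \<Omega>\<^esub> b" "g [^]\<^bsub>BijGroup \<Omega>\<^esub> ee = a" "g [^]\<^bsub>BijGroup \<Omega>\<^esub> ff = b"
          using gdec[OF g(1)] by blast
        have gB: "g \<in> Bij \<Omega>" using ZB g(1) by (rule subsetD)
        have tS: "t \<in> carrier (BijGroup \<Omega>)" using tB cS by simp
        have gS: "g \<in> carrier (BijGroup \<Omega>)" using gB cS by simp
        have "(t [^]\<^bsub>BijGroup \<Omega>\<^esub> ee \<otimes>\<^bsub>BijGroup \<Omega>\<^esub> t [^]\<^bsub>BijGroup \<Omega>\<^esub> ff) \<alpha> = (t [^]\<^bsub>BijGroup \<Omega>\<^esub> (ee + ff)) \<alpha>"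
          using S.nat_pow_mult[OF tS, of ee ff] by simp
        also have "\<dots> = (g [^]\<^bsub>BijGroup \<Omega>\<^esub> (ee + ff)) \<alpha>" using P[OF sZ abZ t g(1) al g(2)] .
        also have "\<dots> = (g [^]\<^bsub>BijGroup \<Omega>\<^esub> ee \<otimes>\<^bsub>BijGroup \<Omega>\<^esub> g [^]\<^bsub>BijGroup \<Omega>\<^esub> ff) \<alpha>"
          using S.nat_pow_mult[OF gS, of ee ff] by simp
        also have "\<dots> = g \<alpha>" using ab(3,4,5) by simp
        finally show "t \<alpha> = (t [^]\<^bsub>BijGroup \<Omega>\<^esub> ee \<otimes>\<^bsub>BijGroup \<Omega>\<^esub> t [^]\<^bsub>BijGroup \<Omega>\<^esub> ff) \<alpha>" using g(2) by simp
      qed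
      show "t \<in> two_closure \<Omega> A <#>\<^bsub>BijGroup \<Omega>\<^esub> two_closure \<Omega> B"
        unfolding set_mult_def
        by (rule UN_I[OF te], rule UN_I[OF tf]) (simp add: eq[symmetric])
    qed
  next
    show "two_closure \<Omega> A <#>\<^bsub>BijGroup \<Omega>\<^esub> two_closure \<Omega> B \<subseteq> two_closure \<Omega> Z"
    proof (rule subsetI)
      fix p assume "p \<in> two_closure \<Omega> A <#>\<^bsub>BijGroup \<Omega>\<^esub> two_closure \<Omega> B"
      then obtain t1 t2 where t1: "t1 \<in> two_closure \<Omega> A" and t2: "t2 \<in> two_closure \<Omega> B"
        and p: "p = t1 \<otimes>\<^bsub>BijGroup \<Omega>\<^esub> t2" unfolding set_mult_def by auto
      have t1B: "t1 \<in> Bij \<Omega>" using t1 by (rule tc_car)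
      have t2B: "t2 \<in> Bij \<Omega>" using t2 by (rule tc_car)
      have all1: "\<forall>x\<in>\<Omega>. \<forall>y\<in>\<Omega>. \<exists>g\<in>A. t1 x = g x \<and> t1 y = g y" using t1 unfolding tc_iff by simp
      have all2: "\<forall>x\<in>\<Omega>. \<forall>y\<in>\<Omega>. \<exists>g\<in>B. t2 x = g x \<and> t2 y = g y" using t2 unfolding tc_iff by simp
      have "t1 \<otimes>\<^bsub>BijGroup \<Omega>\<^esub> t2 \<in> two_closure \<Omega> Z"
        unfolding tc_iff
      proof (intro conjI ballI)
        show "t1 \<otimes>\<^bsub>BijGroup \<Omega>\<^esub> t2 \<in> Bij \<Omega>" using t1B t2B by (rule S_mult)
        fix \<alpha> \<beta> assume al: "\<alpha> \<in> \<Omega>" and be: "\<beta> \<in> \<Omega>"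
        obtain b where b: "b \<in> B" "t2 \<alpha> = b \<alpha>" "t2 \<beta> = b \<beta>" using all2 al be by meson
        have bB: "b \<in> Bij \<Omega>" using BB b(1) by (rule subsetD)
        have ba: "b \<alpha> \<in> \<Omega>" using Bij_mem[OF bB al] .
        have bb: "b \<beta> \<in> \<Omega>" using Bij_mem[OF bB be] .
        obtain a where a: "a \<in> A" "t1 (b \<alpha>) = a (b \<alpha>)" "t1 (b \<beta>) = a (b \<beta>)" using all1 ba bb by meson
        have aB: "a \<in> Bij \<Omega>" using AB a(1) by (rule subsetD)
        have abZ': "a \<otimes>\<^bsub>BijGroup \<Omega>\<^esub> b \<in> Z" unfolding Zd
          using S.dp_mult_center[OF sH sK Gd cHK] a(1) b(1) unfolding Ad Bd by blast
        have "(t1 \<otimes>\<^bsub>BijGroup \<Omega>\<^esub> t2) \<alpha> = (a \<otimes>\<^bsub>BijGroup \<Omega>\<^esub> b) \<alpha>"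
          using mult_apply[OF t1B t2B al] mult_apply[OF aB bB al] a b by simp
        moreover have "(t1 \<otimes>\<^bsub>BijGroup \<Omega>\<^esub> t2) \<beta> = (a \<otimes>\<^bsub>BijGroup \<Omega>\<^esub> b) \<beta>"
          using mult_apply[OF t1B t2B be] mult_apply[OF aB bB be] a b by simp
        ultimately show "\<exists>g\<in>Z. (t1 \<otimes>\<^bsub>BijGroup \<Omega>\<^esub> t2) \<alpha> = g \<alpha> \<and> (t1 \<otimes>\<^bsub>BijGroup \<Omega>\<^esub> t2) \<beta> = g \<beta>"
          using abZ' by (intro bexI conjI)
      qed
      thus "p \<in> two_closure \<Omega> Z" using p by simp
    qed
  qed
  have h4: "two_closure \<Omega> A \<inter> two_closure \<Omega> B = {\<one>\<^bsub>BijGroup \<Omega>\<^esub>}"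
  proof (rule equalityI)
    show "two_closure \<Omega> A \<inter> two_closure \<Omega> B \<subseteq> {\<one>\<^bsub>BijGroup \<Omega>\<^esub>}"
    proof (rule subsetI)
      fix t assume "t \<in> two_closure \<Omega> A \<inter> two_closure \<Omega> B"
      hence tA: "t \<in> two_closure \<Omega> A" and tBB: "t \<in> two_closure \<Omega> B" by auto
      have tB: "t \<in> Bij \<Omega>" using tA by (rule tc_car)
      have all1: "\<forall>x\<in>\<Omega>. \<forall>y\<in>\<Omega>. \<exists>g\<in>A. t x = g x \<and> t y = g y" using tA unfolding tc_iff by simp
      have all2: "\<forall>x\<in>\<Omega>. \<forall>y\<in>\<Omega>. \<exists>g\<in>B. t x = g x \<and> t y = g y" using tBB unfolding tc_iff by simp
      have "t = \<one>\<^bsub>BijGroup \<Omega>\<^esub>"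
      proof (rule Bij_eqI[OF tB S_one])
        fix \<alpha> assume al: "\<alpha> \<in> \<Omega>"
        obtain a where a: "a \<in> A" "t \<alpha> = a \<alpha>" "t \<alpha> = a \<alpha>" using all1 al by meson
        obtain b where b: "b \<in> B" "t \<alpha> = b \<alpha>" "t \<alpha> = b \<alpha>" using all2 al by meson
        have "(t [^]\<^bsub>BijGroup \<Omega>\<^esub> ff) \<alpha> = (a [^]\<^bsub>BijGroup \<Omega>\<^esub> ff) \<alpha>" using P[OF sA abA tA a(1) al a(2)] .
        also have "\<dots> = \<alpha>" using aff[OF a(1)] one_apply[OF al] by simp
        finally have 1: "(t [^]\<^bsub>BijGroup \<Omega>\<^esub> ff) \<alpha> = \<alpha>" .
        have "(t [^]\<^bsub>BijGroup \<Omega>\<^esub> ff) \<alpha> = (b [^]\<^bsub>BijGroup \<Omega>\<^esub> ff) \<alpha>" using P[OF sB abB tBB b(1) al b(2)] .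
        also have "\<dots> = t \<alpha>" using bff[OF b(1)] b(2) by simp
        finally show "t \<alpha> = \<one>\<^bsub>BijGroup \<Omega>\<^esub> \<alpha>" using 1 one_apply[OF al] by simp
      qed
      thus "t \<in> {\<one>\<^bsub>BijGroup \<Omega>\<^esub>}" by simp
    qed
  next
    show "{\<one>\<^bsub>BijGroup \<Omega>\<^esub>} \<subseteq> two_closure \<Omega> A \<inter> two_closure \<Omega> B"
      using subgroup.one_closed[OF tcA] subgroup.one_closed[OF tcB] by simp
  qed
  have h5: "\<forall>h\<in>two_closure \<Omega> A. \<forall>k\<in>two_closure \<Omega> B. h \<otimes>\<^bsub>BijGroup \<Omega>\<^esub> k = k \<otimes>\<^bsub>BijGroup \<Omega>\<^esub> h"
  proof (intro ballI)
    fix t1 t2 assume t1: "t1 \<in> two_closure \<Omega> A" and t2: "t2 \<in> two_closure \<Omega> B"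
    have t1B: "t1 \<in> Bij \<Omega>" using t1 by (rule tc_car)
    have t2B: "t2 \<in> Bij \<Omega>" using t2 by (rule tc_car)
    have c1: "\<forall>b\<in>B. t1 \<otimes>\<^bsub>BijGroup \<Omega>\<^esub> b = b \<otimes>\<^bsub>BijGroup \<Omega>\<^esub> t1"
    proof
      fix b assume b: "b \<in> B"
      have bB: "b \<in> Bij \<Omega>" using BB b by (rule subsetD)
      have cb: "\<forall>a\<in>A. b \<otimes>\<^bsub>BijGroup \<Omega>\<^esub> a = a \<otimes>\<^bsub>BijGroup \<Omega>\<^esub> b" using cAB b by metis
      show "t1 \<otimes>\<^bsub>BijGroup \<Omega>\<^esub> b = b \<otimes>\<^bsub>BijGroup \<Omega>\<^esub> t1"
      proof (rule Bij_eqI[OF S_mult[OF t1B bB] S_mult[OF bB t1B]])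
        fix \<alpha> assume al: "\<alpha> \<in> \<Omega>"
        show "(t1 \<otimes>\<^bsub>BijGroup \<Omega>\<^esub> b) \<alpha> = (b \<otimes>\<^bsub>BijGroup \<Omega>\<^esub> t1) \<alpha>"
          using mult_apply[OF t1B bB al] mult_apply[OF bB t1B al] K[OF AB t1 bB cb al] by simp
      qed
    qed
    show "t1 \<otimes>\<^bsub>BijGroup \<Omega>\<^esub> t2 = t2 \<otimes>\<^bsub>BijGroup \<Omega>\<^esub> t1"
    proof (rule Bij_eqI[OF S_mult[OF t1B t2B] S_mult[OF t2B t1B]])
      fix \<alpha> assume al: "\<alpha> \<in> \<Omega>"
      show "(t1 \<otimes>\<^bsub>BijGroup \<Omega>\<^esub> t2) \<alpha> = (t2 \<otimes>\<^bsub>BijGroup \<Omega>\<^esub> t1) \<alpha>"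
        using mult_apply[OF t1B t2B al] mult_apply[OF t2B t1B al] K[OF BB t2 t1B c1 al] by simp
    qed
  qed
  show ?thesis
    unfolding internal_direct_product_def Z_def[symmetric] A_def[symmetric] B_def[symmetric]
    by (rule conjI[OF tcA conjI[OF tcB conjI[OF h3 conjI[OF h4 h5]]]])
qed

end
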